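(* Let $C_i=\{c_i^1,\ldots,c_i^{j_i}\}$, $1\le i\le k$, be pairwise disjoint sets of variables, and for $1\le u\le n$ let $F_u=\{f_u^1,\ldots,f_u^{n+1}\}\subseteq\mathbb{C}[\bigcup_{i=1}^kC_i]$ be sets of polynomials such that: (i) for each fixed $u$, the polynomials $f_u^1,\ldots,f_u^{n+1}$ are (nonzero) multihomogeneous polynomials in some sets of variables $C_{u^1},\ldots,C_{u^{s_u}}$, all with the same multidegree; (ii) if $u\neq v$ then $F_u$ and $F_v$ involve different (disjoint) collections of the sets $C_i$; (iii) for each $u$, if $l\neq m$ then no monomial of $f_u^l$ is a monomial of $f_u^m$. Let $A=(f_u^l)_{1\le u\le n,\,1\le l\le n+1}$ be the $n\times(n+1)$ matrix, let $O$ be any $n\times(n+1)$ matrix over $\mathbb{T}$, and let $\mathrm{Cram}_O(A)=(S_1,\ldots,S_{n+1})$. Then: 1. $S_1,\ldots,S_{n+1}$ are nonzero multihomogeneous polynomials in the sets of variables $C_1,\ldots,C_k$, all with the same multidegree; 2. for each $l$, if $\sigma\ne\tau$ are two different bijections $\{1,\dots,n\}\to\{1,\dots,n+1\}\setminus\{l\}$ which appear in the expansion of $S_l$, then every monomial of $\prod_{u=1}^n f_u^{\sigma(u)}$ is different from every monomial of $\prod_{u=1}^n f_u^{\tau(u)}$; 3. if $l\ne m$, then $S_l$ and $S_m$ have no common monomial.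
   Context: $\mathbb{T}=(\mathbb{R},\max,+)$. For an $n\times n$ tropical matrix $O$, $|O|_t=\max_{\sigma\in\Sigma_n}\sum_i o_{i\sigma(i)}$. For an $n\times n$ matrix $A$ over a ring, the pseudo-determinant is $\Delta_O(A)=\sum(-1)^{i(\sigma)}a_{1\sigma(1)}\cdots a_{n\sigma(n)}$, summed over those $\sigma\in\Sigma_n$ with $\sum_i o_{i\sigma(i)}=|O|_t$ (these are the permutations "appearing in the expansion"), $(-1)^{i(\sigma)}$ being the sign. For $n\times(n+1)$ matrices, $O^{i}$, $A^{i}$ denote the matrices with the $i$-th column deleted, and $\mathrm{Cram}_O(A)=(S_1,\ldots,S_{n+1})$ with $S_i=\Delta_{O^{i}}(A^{i})$. *)

theory Defs
  imports Complex_Main "HOL-Library.Poly_Mapping" "HOL-Combinatorics.Permutations"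
begin

text \<open>Multivariate polynomials over the complex numbers in variables indexed by nat:
  a monomial is a finitely supported exponent vector, a polynomial is a finitely
  supported map from monomials to coefficients (convolution product).
  The monomials of a polynomial p are exactly Poly_Mapping.keys p.\<close>

type_synonym mpoly = "(nat \<Rightarrow>\<^sub>0 nat) \<Rightarrow>\<^sub>0 complex"

definition deg_in :: "nat set \<Rightarrow> (nat \<Rightarrow>\<^sub>0 nat) \<Rightarrow> nat" where
  "deg_in S m = (\<Sum>x\<in>S. Poly_Mapping.lookup m x)"

definition multihom :: "(nat \<Rightarrow> nat set) \<Rightarrow> nat set \<Rightarrow> (nat \<Rightarrow> nat) \<Rightarrow> mpoly \<Rightarrow> bool" where
  "multihom C J d f \<longleftrightarrow> f \<noteq> 0 \<and>
     (\<forall>m\<in>Poly_Mapping.keys f. Poly_Mapping.keys m \<subseteq> (\<Union>i\<in>J. C i) \<and> (\<forall>i\<in>J. deg_in (C i) m = d i))"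

text \<open>Matrices are functions nat => nat => _, indices 0-based.
  Tropical determinant of an n x n tropical matrix.\<close>
definition tdet :: "nat \<Rightarrow> (nat \<Rightarrow> nat \<Rightarrow> real) \<Rightarrow> real" where
  "tdet n T = Max {(\<Sum>i<n. T i (p i)) | p. p permutes {..<n}}"

text \<open>Pseudo-determinant Delta_O(A): signed sum over the permutations appearing in
  the expansion of the tropical determinant of T.\<close>
definition pdet :: "nat \<Rightarrow> (nat \<Rightarrow> nat \<Rightarrow> real) \<Rightarrow> (nat \<Rightarrow> nat \<Rightarrow> 'a::comm_ring_1) \<Rightarrow> 'a" where
  "pdet n T A = (\<Sum>p\<in>{p. p permutes {..<n} \<and> (\<Sum>i<n. T i (p i)) = tdet n T}.
       of_int (sign p) * (\<Prod>i<n. A i (p i)))"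

definition delcol :: "nat \<Rightarrow> (nat \<Rightarrow> nat \<Rightarrow> 'a) \<Rightarrow> nat \<Rightarrow> nat \<Rightarrow> 'a" where
  "delcol l M = (\<lambda>i j. M i (if j < l then j else Suc j))"

text \<open>Cram_O(A) for n x (n+1) matrices: component l (0-based, l \<le> n).\<close>
definition cram :: "nat \<Rightarrow> (nat \<Rightarrow> nat \<Rightarrow> real) \<Rightarrow> (nat \<Rightarrow> nat \<Rightarrow> 'a::comm_ring_1) \<Rightarrow> nat \<Rightarrow> 'a" where
  "cram n T A l = pdet n (delcol l T) (delcol l A)"

end

theory Submission
  imports Defs
begin

lemma uniq2:
  fixes a b l q :: "nat \<Rightarrow>\<^sub>0 nat"
  assumes "Poly_Mapping.keys a \<subseteq> V" "Poly_Mapping.keys l \<subseteq> V" "Poly_Mapping.keys b \<subseteq> W"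
    "Poly_Mapping.keys q \<subseteq> W" "V \<inter> W = {}" "a + b = l + q"
  shows "a = l \<and> b = q"
proof -
  have e: "Poly_Mapping.lookup a x + Poly_Mapping.lookup b x = Poly_Mapping.lookup l x + Poly_Mapping.lookup q x" for x
    using assms(6) by (metis lookup_add)
  have z: "x \<notin> Poly_Mapping.keys g \<Longrightarrow> Poly_Mapping.lookup g x = 0" for g :: "nat \<Rightarrow>\<^sub>0 nat" and x
    by (simp add: in_keys_iff)
  have "Poly_Mapping.lookup a x = Poly_Mapping.lookup l x \<and> Poly_Mapping.lookup b x = Poly_Mapping.lookup q x" for x
  proof (cases "x \<in> V")
    case True
    then have "x \<notin> W" using assms(5) by blast
    then have "Poly_Mapping.lookup b x = 0" "Poly_Mapping.lookup q x = 0" using assms(3,4) z by blast+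
    then show ?thesis using e[of x] by simp
  next
    case False
    then have "Poly_Mapping.lookup a x = 0" "Poly_Mapping.lookup l x = 0" using assms(1,2) z by blast+
    then show ?thesis using e[of x] by simp
  qed
  then show ?thesis by (auto intro: poly_mapping_eqI)
qed

lemma lookup_mult_disj:
  fixes p q :: mpoly
  assumes "\<forall>m\<in>Poly_Mapping.keys p. Poly_Mapping.keys m \<subseteq> V"
    "\<forall>m\<in>Poly_Mapping.keys q. Poly_Mapping.keys m \<subseteq> W" "V \<inter> W = {}"
    "Poly_Mapping.keys a \<subseteq> V" "Poly_Mapping.keys b \<subseteq> W"
  shows "Poly_Mapping.lookup (p * q) (a + b) = Poly_Mapping.lookup p a * Poly_Mapping.lookup q b"
proof -
  have fe: "(\<lambda>l. Poly_Mapping.lookup p l * Sum_any (\<lambda>q'. (Poly_Mapping.lookup q q' :: complex) when a + b = l + q'))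
      = (\<lambda>l. if l = a then Poly_Mapping.lookup p a * Poly_Mapping.lookup q b else 0)"
  proof
    fix l :: "nat \<Rightarrow>\<^sub>0 nat"
    show "Poly_Mapping.lookup p l * Sum_any (\<lambda>q'. (Poly_Mapping.lookup q q' :: complex) when a + b = l + q') = (if l = a then Poly_Mapping.lookup p a * Poly_Mapping.lookup q b else 0)"
    proof (cases "l = a")
      case True
      have "(\<lambda>q'. Poly_Mapping.lookup q q' when a + b = l + q') = (\<lambda>q'. if q' = b then Poly_Mapping.lookup q q' else 0)"
        using True by (auto simp: when_def)
      then show ?thesis using True by simp
    next
      case False
      show ?thesis
      proof (cases "Poly_Mapping.lookup p l = 0")
        case False
        then have lk: "Poly_Mapping.keys l \<subseteq> V" using assms(1) by (simp add: in_keys_iff)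
        have "(\<lambda>q'. Poly_Mapping.lookup q q' when a + b = l + q') = (\<lambda>q'. 0)"
        proof
          fix q' :: "nat \<Rightarrow>\<^sub>0 nat"
          show "(Poly_Mapping.lookup q q' when a + b = l + q') = 0"
          proof (cases "Poly_Mapping.lookup q q' = 0")
            case False
            then have "Poly_Mapping.keys q' \<subseteq> W" using assms(2) by (simp add: in_keys_iff)
            then have "a + b \<noteq> l + q'" using uniq2[OF assms(4) lk assms(5) _ assms(3)] \<open>l \<noteq> a\<close> by blast
            then show ?thesis by (simp add: when_def)
          qed (simp add: when_def)
        qed
        then have "Sum_any (\<lambda>q'. (Poly_Mapping.lookup q q' :: complex) when a + b = l + q') = 0"
          by (metis Sum_any.neutral)
        then show ?thesis using \<open>l \<noteq> a\<close> by simp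
      qed (use \<open>l \<noteq> a\<close> in simp)
    qed
  qed
  show ?thesis by (subst lookup_mult, subst fe, simp)
qed


lemma keys_sum_mono:
  fixes m :: "nat \<Rightarrow> (nat \<Rightarrow>\<^sub>0 nat)"
  shows "Poly_Mapping.keys (\<Sum>u<n. m u) \<subseteq> (\<Union>u<n. Poly_Mapping.keys (m u))"
  by (rule keys_sum)

lemma keys_prod_disj:
  fixes g :: "nat \<Rightarrow> mpoly" and V :: "nat \<Rightarrow> nat set"
  assumes vars: "\<And>u m. u < n \<Longrightarrow> m \<in> Poly_Mapping.keys (g u) \<Longrightarrow> Poly_Mapping.keys m \<subseteq> V u"
    and disj: "\<And>u v. u < n \<Longrightarrow> v < n \<Longrightarrow> u \<noteq> v \<Longrightarrow> V u \<inter> V v = {}"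
  shows "M \<in> Poly_Mapping.keys (\<Prod>u<n. g u) \<longleftrightarrow>
         (\<exists>m. (\<forall>u<n. m u \<in> Poly_Mapping.keys (g u)) \<and> M = (\<Sum>u<n. m u))"
  using assms
proof (induction n arbitrary: M)
  case 0
  then show ?case by auto
next
  case (Suc n)
  let ?P = "\<Prod>u<n. g u"
  have IH: "M \<in> Poly_Mapping.keys ?P \<longleftrightarrow>
         (\<exists>m. (\<forall>u<n. m u \<in> Poly_Mapping.keys (g u)) \<and> M = (\<Sum>u<n. m u))" for M
    using Suc.IH[of M] Suc.prems by auto
  let ?U = "\<Union>u<n. V u"
  have Pv: "\<forall>a\<in>Poly_Mapping.keys ?P. Poly_Mapping.keys a \<subseteq> ?U"
  proof
    fix a assume "a \<in> Poly_Mapping.keys ?P"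
    then obtain m where m: "\<forall>u<n. m u \<in> Poly_Mapping.keys (g u)" "a = (\<Sum>u<n. m u)" using IH by blast
    have "Poly_Mapping.keys a \<subseteq> (\<Union>u<n. Poly_Mapping.keys (m u))" unfolding m(2) by (rule keys_sum_mono)
    also have "\<dots> \<subseteq> ?U"
    proof -
      have "\<And>u. u < n \<Longrightarrow> Poly_Mapping.keys (m u) \<subseteq> V u" using m(1) Suc.prems(1) by (meson less_SucI)
      then show ?thesis by (intro UN_mono) auto
    qed
    finally show "Poly_Mapping.keys a \<subseteq> ?U" .
  qed
  have gv: "\<forall>b\<in>Poly_Mapping.keys (g n). Poly_Mapping.keys b \<subseteq> V n" using Suc.prems(1) by auto
  have UV: "?U \<inter> V n = {}"
  proof -
    have "V u \<inter> V n = {}" if "u < n" for u using Suc.prems(2)[of u n] that by simp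
    then show ?thesis by blast
  qed
  have eq: "(\<Prod>u<Suc n. g u) = ?P * g n" by simp
  show ?case
  proof
    assume "M \<in> Poly_Mapping.keys (\<Prod>u<Suc n. g u)"
    then obtain a b where ab: "a \<in> Poly_Mapping.keys ?P" "b \<in> Poly_Mapping.keys (g n)" "M = a + b"
      using keys_mult[of ?P "g n"] eq by auto
    obtain m where m: "\<forall>u<n. m u \<in> Poly_Mapping.keys (g u)" "a = (\<Sum>u<n. m u)" using IH ab(1) by blast
    let ?m = "m(n := b)"
    have "(\<Sum>u<n. ?m u) = (\<Sum>u<n. m u)" by (rule sum.cong) auto
    then have "M = (\<Sum>u<Suc n. ?m u)" using ab m by simp
    moreover have "\<forall>u<Suc n. ?m u \<in> Poly_Mapping.keys (g u)" using m ab(2) less_Suc_eq by auto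
    ultimately show "\<exists>m. (\<forall>u<Suc n. m u \<in> Poly_Mapping.keys (g u)) \<and> M = (\<Sum>u<Suc n. m u)" by blast
  next
    assume "\<exists>m. (\<forall>u<Suc n. m u \<in> Poly_Mapping.keys (g u)) \<and> M = (\<Sum>u<Suc n. m u)"
    then obtain m where m: "\<forall>u<Suc n. m u \<in> Poly_Mapping.keys (g u)" "M = (\<Sum>u<Suc n. m u)" by blast
    let ?a = "\<Sum>u<n. m u"
    have "\<forall>u<n. m u \<in> Poly_Mapping.keys (g u)" using m(1) by simp
    then have a: "?a \<in> Poly_Mapping.keys ?P" using IH by blast
    have b: "m n \<in> Poly_Mapping.keys (g n)" using m(1) by auto
    have "Poly_Mapping.lookup (?P * g n) (?a + m n) = Poly_Mapping.lookup ?P ?a * Poly_Mapping.lookup (g n) (m n)"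
      by (rule lookup_mult_disj[OF Pv gv UV]) (use Pv a gv b in auto)
    also have "\<dots> \<noteq> 0" using a b by (simp add: in_keys_iff)
    finally show "M \<in> Poly_Mapping.keys (\<Prod>u<Suc n. g u)" using m(2) eq by (simp add: in_keys_iff)
  qed
qed

lemma sum_uniq:
  fixes m m' :: "nat \<Rightarrow> (nat \<Rightarrow>\<^sub>0 nat)"
  assumes "\<And>u. u < n \<Longrightarrow> Poly_Mapping.keys (m u) \<subseteq> V u"
    "\<And>u. u < n \<Longrightarrow> Poly_Mapping.keys (m' u) \<subseteq> V u"
    "\<And>u v. u < n \<Longrightarrow> v < n \<Longrightarrow> u \<noteq> v \<Longrightarrow> V u \<inter> V v = {}"
    "(\<Sum>u<n. m u) = (\<Sum>u<n. m' u)" "v < n"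
  shows "m v = m' v"
proof (rule poly_mapping_eqI)
  fix x
  have z: "x \<notin> Poly_Mapping.keys g \<Longrightarrow> Poly_Mapping.lookup g x = 0" for g :: "nat \<Rightarrow>\<^sub>0 nat"
    by (simp add: in_keys_iff)
  show "Poly_Mapping.lookup (m v) x = Poly_Mapping.lookup (m' v) x"
  proof (cases "x \<in> V v")
    case True
    have red: "Poly_Mapping.lookup (\<Sum>u<n. h u) x = Poly_Mapping.lookup (h v) x"
      if h: "\<And>u. u < n \<Longrightarrow> Poly_Mapping.keys (h u) \<subseteq> V u" for h :: "nat \<Rightarrow> (nat \<Rightarrow>\<^sub>0 nat)"
    proof -
      have "Poly_Mapping.lookup (\<Sum>u<n. h u) x = (\<Sum>u<n. Poly_Mapping.lookup (h u) x)"
        by (simp add: lookup_sum)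
      also have "\<dots> = (\<Sum>u<n. if u = v then Poly_Mapping.lookup (h v) x else 0)"
      proof (rule sum.cong)
        fix u assume "u \<in> {..<n}"
        then show "Poly_Mapping.lookup (h u) x = (if u = v then Poly_Mapping.lookup (h v) x else 0)"
          using assms(3)[of u v] assms(5) True h[of u] z[of "h u"] by auto
      qed simp
      also have "\<dots> = Poly_Mapping.lookup (h v) x" using assms(5) by simp
      finally show ?thesis .
    qed
    have r1: "Poly_Mapping.lookup (\<Sum>u<n. m u) x = Poly_Mapping.lookup (m v) x"
      by (rule red) (rule assms(1))
    have r2: "Poly_Mapping.lookup (\<Sum>u<n. m' u) x = Poly_Mapping.lookup (m' v) x"
      by (rule red) (rule assms(2))
    have "Poly_Mapping.lookup (m v) x = Poly_Mapping.lookup (\<Sum>u<n. m u) x" using r1 by (rule sym)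
    also have "\<dots> = Poly_Mapping.lookup (\<Sum>u<n. m' u) x" using assms(4) by (rule arg_cong)
    also have "\<dots> = Poly_Mapping.lookup (m' v) x" by (rule r2)
    finally show ?thesis .
  next
    case False
    then have "x \<notin> Poly_Mapping.keys (m v)" "x \<notin> Poly_Mapping.keys (m' v)"
      using assms(1)[OF assms(5)] assms(2)[OF assms(5)] by auto
    then show ?thesis by (simp add: in_keys_iff)
  qed
qed



theorem lemma2p10:
  fixes k n :: nat
    and C :: "nat \<Rightarrow> nat set"
    and J :: "nat \<Rightarrow> nat set"
    and d :: "nat \<Rightarrow> nat \<Rightarrow> nat"
    and f :: "nat \<Rightarrow> nat \<Rightarrow> mpoly"
    and T :: "nat \<Rightarrow> nat \<Rightarrow> real"
  assumes C_fin: "\<And>i. i < k \<Longrightarrow> finite (C i)"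
    and C_disj: "\<And>i i'. i < k \<Longrightarrow> i' < k \<Longrightarrow> i \<noteq> i' \<Longrightarrow> C i \<inter> C i' = {}"
    and J_sub: "\<And>u. u < n \<Longrightarrow> J u \<subseteq> {..<k}"
    and hom: "\<And>u l. u < n \<Longrightarrow> l < Suc n \<Longrightarrow> multihom C (J u) (d u) (f u l)"
    and J_disj: "\<And>u v. u < n \<Longrightarrow> v < n \<Longrightarrow> u \<noteq> v \<Longrightarrow> J u \<inter> J v = {}"
    and mono_disj: "\<And>u l m. u < n \<Longrightarrow> l < Suc n \<Longrightarrow> m < Suc n \<Longrightarrow> l \<noteq> m \<Longrightarrow>
                      Poly_Mapping.keys (f u l) \<inter> Poly_Mapping.keys (f u m) = {}"
  shows "(\<exists>D. \<forall>l < Suc n. multihom C {..<k} D (cram n T f l))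
         \<and> (\<forall>l \<sigma> \<tau>. l < Suc n \<longrightarrow>
           bij_betw \<sigma> {..<n} ({..<Suc n} - {l}) \<longrightarrow>
           bij_betw \<tau> {..<n} ({..<Suc n} - {l}) \<longrightarrow>
           (\<exists>u<n. \<sigma> u \<noteq> \<tau> u) \<longrightarrow>
           (\<Sum>u<n. T u (\<sigma> u)) = tdet n (delcol l T) \<longrightarrow>
           (\<Sum>u<n. T u (\<tau> u)) = tdet n (delcol l T) \<longrightarrow>
           Poly_Mapping.keys (\<Prod>u<n. f u (\<sigma> u)) \<inter> Poly_Mapping.keys (\<Prod>u<n. f u (\<tau> u)) = {})
         \<and> (\<forall>l m. l < Suc n \<longrightarrow> m < Suc n \<longrightarrow> l \<noteq> m \<longrightarrow>
           Poly_Mapping.keys (cram n T f l) \<inter> Poly_Mapping.keys (cram n T f m) = {})"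
  proof -
  define V where "V u = (\<Union>i\<in>J u. C i)" for u
  have Vdisj: "V u \<inter> V v = {}" if "u < n" "v < n" "u \<noteq> v" for u v
  proof -
    have "C i \<inter> C j = {}" if "i \<in> J u" "j \<in> J v" for i j
      using C_disj[of i j] J_sub[of u] J_sub[of v] J_disj[of u v] \<open>u < n\<close> \<open>v < n\<close> \<open>u \<noteq> v\<close> that by blast
    then show ?thesis unfolding V_def by blast
  qed
  have fvars: "Poly_Mapping.keys M \<subseteq> V u" if "u < n" "l < Suc n" "M \<in> Poly_Mapping.keys (f u l)" for u l M
    using hom[OF that(1,2)] that(3) unfolding multihom_def V_def by blast
  define sh where "sh l j = (if j < l then j else Suc j)" for l j :: nat
  define P where "P l = {p. p permutes {..<n} \<and> (\<Sum>i<n. delcol l T i (p i)) = tdet n (delcol l T)}" for l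
  have cram_eq: "cram n T f l = (\<Sum>p\<in>P l. of_int (sign p) * (\<Prod>i<n. f i (sh l (p i))))" for l
    unfolding cram_def pdet_def P_def sh_def delcol_def by simp
  have shinj: "sh l a \<noteq> sh l b" if "a \<noteq> b" for l a b using that unfolding sh_def by auto
  have shbij: "bij_betw (\<lambda>u. sh l (p u)) {..<n} ({..<Suc n} - {l})"
    if "l < Suc n" "p permutes {..<n}" for l p
  proof -
    have b1: "bij_betw p {..<n} {..<n}" using that(2) by (rule permutes_imp_bij)
    have b2: "bij_betw (sh l) {..<n} ({..<Suc n} - {l})"
    proof (rule bij_betw_imageI)
      show "inj_on (sh l) {..<n}" using shinj by (meson inj_onI)
      show "sh l ` {..<n} = {..<Suc n} - {l}"
      proof
        show "sh l ` {..<n} \<subseteq> {..<Suc n} - {l}" unfolding sh_def by auto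
        show "{..<Suc n} - {l} \<subseteq> sh l ` {..<n}"
        proof
          fix j assume j: "j \<in> {..<Suc n} - {l}"
          show "j \<in> sh l ` {..<n}"
          proof (cases "j < l")
            case True
            then have "sh l j = j" "j < n" using that(1) by (auto simp: sh_def)
            then show ?thesis by (metis image_eqI lessThan_iff)
          next
            case False
            then have "j > l" using j by auto
            then have "sh l (j - 1) = j" "j - 1 < n" using j by (auto simp: sh_def)
            then show ?thesis by (metis image_eqI lessThan_iff)
          qed
        qed
      qed
    qed
    have "bij_betw (sh l \<circ> p) {..<n} ({..<Suc n} - {l})" using bij_betw_trans[OF b1 b2] .
    then show ?thesis by (simp add: comp_def)
  qed
  have keysprod: "M \<in> Poly_Mapping.keys (\<Prod>u<n. f u (\<sigma> u)) \<longleftrightarrow>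
      (\<exists>m. (\<forall>u<n. m u \<in> Poly_Mapping.keys (f u (\<sigma> u))) \<and> M = (\<Sum>u<n. m u))"
    if "\<forall>u<n. \<sigma> u < Suc n" for \<sigma> M
  proof (rule keys_prod_disj[where V = V])
    show "\<And>u m. u < n \<Longrightarrow> m \<in> Poly_Mapping.keys (f u (\<sigma> u)) \<Longrightarrow> Poly_Mapping.keys m \<subseteq> V u"
      using fvars that by blast
    show "\<And>u v. u < n \<Longrightarrow> v < n \<Longrightarrow> u \<noteq> v \<Longrightarrow> V u \<inter> V v = {}" using Vdisj by blast
  qed
  have core: "Poly_Mapping.keys (\<Prod>u<n. f u (\<sigma> u)) \<inter> Poly_Mapping.keys (\<Prod>u<n. f u (\<tau> u)) = {}"
    if s: "\<forall>u<n. \<sigma> u < Suc n" and t: "\<forall>u<n. \<tau> u < Suc n" and u0: "u0 < n" "\<sigma> u0 \<noteq> \<tau> u0"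
    for \<sigma> \<tau> u0
  proof (rule ccontr)
    assume "Poly_Mapping.keys (\<Prod>u<n. f u (\<sigma> u)) \<inter> Poly_Mapping.keys (\<Prod>u<n. f u (\<tau> u)) \<noteq> {}"
    then obtain M where M: "M \<in> Poly_Mapping.keys (\<Prod>u<n. f u (\<sigma> u))" "M \<in> Poly_Mapping.keys (\<Prod>u<n. f u (\<tau> u))"
      by blast
    obtain m where m: "\<forall>u<n. m u \<in> Poly_Mapping.keys (f u (\<sigma> u))" "M = (\<Sum>u<n. m u)"
      using keysprod[OF s] M(1) by blast
    obtain m' where m': "\<forall>u<n. m' u \<in> Poly_Mapping.keys (f u (\<tau> u))" "M = (\<Sum>u<n. m' u)"
      using keysprod[OF t] M(2) by blast
    have "m u0 = m' u0"
    proof (rule sum_uniq[where V = V and n = n])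
      show "\<And>u. u < n \<Longrightarrow> Poly_Mapping.keys (m u) \<subseteq> V u" using m(1) fvars s by blast
      show "\<And>u. u < n \<Longrightarrow> Poly_Mapping.keys (m' u) \<subseteq> V u" using m'(1) fvars t by blast
      show "\<And>u v. u < n \<Longrightarrow> v < n \<Longrightarrow> u \<noteq> v \<Longrightarrow> V u \<inter> V v = {}" using Vdisj by blast
      show "(\<Sum>u<n. m u) = (\<Sum>u<n. m' u)" using m(2) m'(2) by simp
    qed (rule u0(1))
    then show False using mono_disj[of u0 "\<sigma> u0" "\<tau> u0"] m(1) m'(1) u0 s t by auto
  qed
  have sign_cases: "of_int (sign p) * X = X \<or> of_int (sign p) * X = - X" for p :: "nat \<Rightarrow> nat" and X :: mpoly
    by (auto simp: sign_def)
  have keys_smul: "Poly_Mapping.keys (of_int (sign p) * X) \<subseteq> Poly_Mapping.keys X" for p :: "nat \<Rightarrow> nat" and X :: mpoly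
    using sign_cases[of p X] by auto
  have lookup_smul: "Poly_Mapping.lookup (of_int (sign p) * X) M = of_int (sign p) * Poly_Mapping.lookup X M"
    for p :: "nat \<Rightarrow> nat" and X :: mpoly and M
    by (auto simp: sign_def)
  have keys_cram: "\<exists>p\<in>P l. M \<in> Poly_Mapping.keys (\<Prod>i<n. f i (sh l (p i)))"
    if "M \<in> Poly_Mapping.keys (cram n T f l)" for l M
    using that keys_sum[of "\<lambda>p. of_int (sign p) * (\<Prod>i<n. f i (sh l (p i)))" "P l"] keys_smul
    unfolding cram_eq by blast
  have Pperm: "p permutes {..<n}" if "p \<in> P l" for p l using that unfolding P_def by auto
  have Pfin: "finite (P l)" for l
    by (rule finite_subset[of _ "{p. p permutes {..<n}}"]) (auto simp: P_def finite_permutations)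
  have Pne: "P l \<noteq> {}" for l
  proof -
    let ?S = "{(\<Sum>i<n. delcol l T i (p i)) | p. p permutes {..<n}}"
    have "?S = (\<lambda>p. \<Sum>i<n. delcol l T i (p i)) ` {p. p permutes {..<n}}" by auto
    then have "finite ?S" using finite_permutations[of "{..<n}"] by simp
    moreover have "?S \<noteq> {}" using permutes_id by blast
    ultimately have "Max ?S \<in> ?S" by (rule Max_in)
    then obtain p where "p permutes {..<n}" "(\<Sum>i<n. delcol l T i (p i)) = Max ?S" by auto
    then have "p \<in> P l" unfolding P_def tdet_def by auto
    then show ?thesis by blast
  qed
  have shlt: "\<forall>u<n. sh l (p u) < Suc n" if "l < Suc n" "p permutes {..<n}" for l p
    using shbij[OF that] by (auto dest: bij_betwE)
  have part2: "\<forall>l \<sigma> \<tau>. l < Suc n \<longrightarrow>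
           bij_betw \<sigma> {..<n} ({..<Suc n} - {l}) \<longrightarrow>
           bij_betw \<tau> {..<n} ({..<Suc n} - {l}) \<longrightarrow>
           (\<exists>u<n. \<sigma> u \<noteq> \<tau> u) \<longrightarrow>
           (\<Sum>u<n. T u (\<sigma> u)) = tdet n (delcol l T) \<longrightarrow>
           (\<Sum>u<n. T u (\<tau> u)) = tdet n (delcol l T) \<longrightarrow>
           Poly_Mapping.keys (\<Prod>u<n. f u (\<sigma> u)) \<inter> Poly_Mapping.keys (\<Prod>u<n. f u (\<tau> u)) = {}"
  proof (intro allI impI)
    fix l \<sigma> \<tau>
    assume a: "bij_betw \<sigma> {..<n} ({..<Suc n} - {l})" "bij_betw \<tau> {..<n} ({..<Suc n} - {l})"
      "\<exists>u<n. \<sigma> u \<noteq> \<tau> u"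
    then obtain u0 where "u0 < n" "\<sigma> u0 \<noteq> \<tau> u0" by blast
    moreover have "\<forall>u<n. \<sigma> u < Suc n" "\<forall>u<n. \<tau> u < Suc n" using a(1,2) by (auto dest: bij_betwE)
    ultimately show "Poly_Mapping.keys (\<Prod>u<n. f u (\<sigma> u)) \<inter> Poly_Mapping.keys (\<Prod>u<n. f u (\<tau> u)) = {}"
      using core by blast
  qed
  have part3: "\<forall>l m. l < Suc n \<longrightarrow> m < Suc n \<longrightarrow> l \<noteq> m \<longrightarrow>
           Poly_Mapping.keys (cram n T f l) \<inter> Poly_Mapping.keys (cram n T f m) = {}"
  proof (intro allI impI)
    fix l m assume lm: "l < Suc n" "m < Suc n" "l \<noteq> m"
    show "Poly_Mapping.keys (cram n T f l) \<inter> Poly_Mapping.keys (cram n T f m) = {}"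
    proof (rule ccontr)
      assume "Poly_Mapping.keys (cram n T f l) \<inter> Poly_Mapping.keys (cram n T f m) \<noteq> {}"
      then obtain M where M: "M \<in> Poly_Mapping.keys (cram n T f l)" "M \<in> Poly_Mapping.keys (cram n T f m)" by blast
      obtain p where p: "p \<in> P l" "M \<in> Poly_Mapping.keys (\<Prod>i<n. f i (sh l (p i)))" using keys_cram M(1) by blast
      obtain q where q: "q \<in> P m" "M \<in> Poly_Mapping.keys (\<Prod>i<n. f i (sh m (q i)))" using keys_cram M(2) by blast
      have bp: "bij_betw (\<lambda>u. sh l (p u)) {..<n} ({..<Suc n} - {l})" using shbij lm(1) Pperm p(1) by blast
      have bq: "bij_betw (\<lambda>u. sh m (q u)) {..<n} ({..<Suc n} - {m})" using shbij lm(2) Pperm q(1) by blast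
      have "\<exists>u<n. sh l (p u) \<noteq> sh m (q u)"
      proof (rule ccontr)
        assume "\<not> (\<exists>u<n. sh l (p u) \<noteq> sh m (q u))"
        then have "(\<lambda>u. sh l (p u)) ` {..<n} = (\<lambda>u. sh m (q u)) ` {..<n}" by auto
        then have "{..<Suc n} - {l} = {..<Suc n} - {m}" using bp bq by (simp add: bij_betw_def)
        then show False using lm by blast
      qed
      then obtain u0 where "u0 < n" "sh l (p u0) \<noteq> sh m (q u0)" by blast
      then have "Poly_Mapping.keys (\<Prod>i<n. f i (sh l (p i))) \<inter> Poly_Mapping.keys (\<Prod>i<n. f i (sh m (q i))) = {}"
        using core[of "\<lambda>u. sh l (p u)" "\<lambda>u. sh m (q u)" u0] shlt lm Pperm p(1) q(1) by blast
      then show False using p q by blast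
    qed
  qed
  define D where "D i = (\<Sum>u<n. if i \<in> J u then d u i else 0)" for i
  have part1: "multihom C {..<k} D (cram n T f l)" if l: "l < Suc n" for l
  proof -
    have nz: "cram n T f l \<noteq> 0"
    proof -
      obtain p0 where p0: "p0 \<in> P l" using Pne by blast
      let ?s = "\<lambda>p u. sh l (p u)"
      have s0: "\<forall>u<n. ?s p0 u < Suc n" using shlt l Pperm p0 by blast
      define m where "m u = (SOME x. x \<in> Poly_Mapping.keys (f u (?s p0 u)))" for u
      have "\<forall>u<n. m u \<in> Poly_Mapping.keys (f u (?s p0 u))"
      proof (intro allI impI)
        fix u assume "u < n"
        then have "f u (?s p0 u) \<noteq> 0" using hom s0 unfolding multihom_def by blast
        then have "Poly_Mapping.keys (f u (?s p0 u)) \<noteq> {}" by simp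
        then show "m u \<in> Poly_Mapping.keys (f u (?s p0 u))" by (metis m_def some_in_eq)
      qed
      then have M0: "(\<Sum>u<n. m u) \<in> Poly_Mapping.keys (\<Prod>u<n. f u (?s p0 u))"
        using keysprod[OF s0] by blast
      define M where "M = (\<Sum>u<n. m u)"
      have other: "Poly_Mapping.lookup (\<Prod>u<n. f u (?s p u)) M = 0" if "p \<in> P l - {p0}" for p
      proof -
        have pp: "p permutes {..<n}" "p0 permutes {..<n}" using that p0 Pperm by auto
        have "\<exists>u<n. p u \<noteq> p0 u"
        proof (rule ccontr)
          assume "\<not> (\<exists>u<n. p u \<noteq> p0 u)"
          then have "p x = p0 x" for x using pp by (cases "x < n") (auto simp: permutes_def)
          then show False using that by auto
        qed
        then obtain u0 where "u0 < n" "?s p u0 \<noteq> ?s p0 u0" using shinj by blast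
        then have "Poly_Mapping.keys (\<Prod>u<n. f u (?s p u)) \<inter> Poly_Mapping.keys (\<Prod>u<n. f u (?s p0 u)) = {}"
          using core[of "?s p" "?s p0" u0] shlt l pp by blast
        then show ?thesis using M0 unfolding M_def by (auto simp: in_keys_iff)
      qed
      have "Poly_Mapping.lookup (cram n T f l) M
          = (\<Sum>p\<in>P l. of_int (sign p) * Poly_Mapping.lookup (\<Prod>u<n. f u (?s p u)) M)"
        unfolding cram_eq lookup_sum lookup_smul by simp
      also have "\<dots> = of_int (sign p0) * Poly_Mapping.lookup (\<Prod>u<n. f u (?s p0 u)) M
          + (\<Sum>p\<in>P l - {p0}. of_int (sign p) * Poly_Mapping.lookup (\<Prod>u<n. f u (?s p u)) M)"
        using sum.remove[OF Pfin p0] by simp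
      also have "(\<Sum>p\<in>P l - {p0}. of_int (sign p) * Poly_Mapping.lookup (\<Prod>u<n. f u (?s p u)) M) = 0"
        using other by simp
      finally have "Poly_Mapping.lookup (cram n T f l) M = of_int (sign p0) * Poly_Mapping.lookup (\<Prod>u<n. f u (?s p0 u)) M"
        by simp
      moreover have "Poly_Mapping.lookup (\<Prod>u<n. f u (?s p0 u)) M \<noteq> 0" using M0 unfolding M_def by (simp add: in_keys_iff)
      moreover have "(of_int (sign p0) :: complex) \<noteq> 0" by (simp add: sign_def)
      ultimately have "Poly_Mapping.lookup (cram n T f l) M \<noteq> 0" by simp
      then show ?thesis by auto
    qed
    have mons: "Poly_Mapping.keys M \<subseteq> (\<Union>i\<in>{..<k}. C i) \<and> (\<forall>i\<in>{..<k}. deg_in (C i) M = D i)"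
      if M: "M \<in> Poly_Mapping.keys (cram n T f l)" for M
    proof -
      obtain p where p: "p \<in> P l" "M \<in> Poly_Mapping.keys (\<Prod>i<n. f i (sh l (p i)))" using keys_cram M by blast
      have sp: "\<forall>u<n. sh l (p u) < Suc n" using shlt l Pperm p(1) by blast
      obtain m where m: "\<forall>u<n. m u \<in> Poly_Mapping.keys (f u (sh l (p u)))" "M = (\<Sum>u<n. m u)"
        using keysprod[OF sp] p(2) by blast
      have mv: "Poly_Mapping.keys (m u) \<subseteq> V u" if "u < n" for u using fvars m(1) sp that by blast
      have "Poly_Mapping.keys M \<subseteq> (\<Union>u<n. Poly_Mapping.keys (m u))" unfolding m(2) by (rule keys_sum_mono)
      also have "\<dots> \<subseteq> (\<Union>u<n. V u)" using mv by (intro UN_mono) auto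
      also have "\<dots> \<subseteq> (\<Union>i\<in>{..<k}. C i)"
      proof
        fix x assume "x \<in> (\<Union>u<n. V u)"
        then obtain u i where "u < n" "i \<in> J u" "x \<in> C i" unfolding V_def by blast
        then show "x \<in> (\<Union>i\<in>{..<k}. C i)" using J_sub by blast
      qed
      finally have k1: "Poly_Mapping.keys M \<subseteq> (\<Union>i\<in>{..<k}. C i)" .
      have "deg_in (C i) M = D i" if i: "i < k" for i
      proof -
        have "deg_in (C i) M = (\<Sum>x\<in>C i. \<Sum>u<n. Poly_Mapping.lookup (m u) x)"
          unfolding deg_in_def m(2) lookup_sum by simp
        also have "\<dots> = (\<Sum>u<n. deg_in (C i) (m u))"
          unfolding deg_in_def by (rule sum.swap)
        also have "\<dots> = D i" unfolding D_def
        proof (rule sum.cong)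
          fix u assume u: "u \<in> {..<n}"
          show "deg_in (C i) (m u) = (if i \<in> J u then d u i else 0)"
          proof (cases "i \<in> J u")
            case True
            then show ?thesis using hom[of u "sh l (p u)"] u sp m(1) unfolding multihom_def by auto
          next
            case False
            have "Poly_Mapping.lookup (m u) x = 0" if "x \<in> C i" for x
            proof -
              have "x \<notin> V u" using False that C_disj[of i] J_sub[of u] u i unfolding V_def by blast
              then show ?thesis using mv[of u] u by (auto simp: in_keys_iff)
            qed
            then show ?thesis using False unfolding deg_in_def by simp
          qed
        qed simp
        finally show ?thesis .
      qed
      then show ?thesis using k1 by auto
    qed
    show ?thesis unfolding multihom_def using nz mons by blast
  qed
  have part1': "\<forall>l<Suc n. multihom C {..<k} D (cram n T f l)" using part1 by blast
  have A: "\<exists>D. \<forall>l<Suc n. multihom C {..<k} D (cram n T f l)" by (rule exI[where x = D]) (rule part1')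
  show ?thesis
    apply (rule conjI)
     apply (rule A)
    apply (rule conjI)
     apply (rule part2)
    apply (rule part3)
    done
qed

end
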